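(* Fix $w$ in the single-component setting, and suppose $\sigma\le1$. Then $L(w)\ge0.25\,p(0)\int_0^\infty\exp\big((|s(0)|-1)\delta-\frac\rho2\delta^2\big)\,d\delta$.
   Context: Single-component setting: $y$ uniform on $\{\pm1\}$; $x=(x_1,x_2)$, $x_1\in\mathbb{R}^{d_1}$, $x_2\sim\mathcal{N}(0,\Sigma_2)$ with $\Sigma_2\succ0$ independent of $x_1$. $\ell_{exp}(t)=\exp(-|t|)$, $L(w)=\mathbb{E}[\ell_{exp}(w^\top x)]$. For fixed $w=(w_1,w_2)$: $\sigma=\sqrt{w_2^\top\Sigma_2w_2}$; $p$ is the density of $\mu=w_1^\top x_1$, assumed such that $\log p$ is differentiable, $\nu$-strongly concave and $\rho$-smooth (i.e. $-\rho\le(\log p)''\le-\nu$) for some $0<\nu\le\rho$; $s(\mu)=\frac{p'(\mu)}{p(\mu)}$. Then $L(w)=\mathbb{E}_\mu[g_\sigma(\mu)]$ with $g_\sigma(\mu)=\mathbb{E}_{Z\sim\mathcal{N}(0,1)}[\ell_{exp}(\mu+\sigma Z)]$. *)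

theory Defs
  imports "HOL-Probability.Probability"
begin

definition ell_exp :: "real \<Rightarrow> real" where
  "ell_exp t = exp (- \<bar>t\<bar>)"

definition g_sigma :: "real \<Rightarrow> real \<Rightarrow> real" where
  "g_sigma \<sigma> \<mu> = (\<integral>z. std_normal_density z * ell_exp (\<mu> + \<sigma> * z) \<partial>lborel)"

text \<open>L(w) = E_mu [g_sigma(mu)], where mu = w1' x1 has density p and
  sigma = sqrt(w2' Sigma2 w2).\<close>
definition loss_L :: "(real \<Rightarrow> real) \<Rightarrow> real \<Rightarrow> real" where
  "loss_L p \<sigma> = (\<integral>\<mu>. p \<mu> * g_sigma \<sigma> \<mu> \<partial>lborel)"

end

theory Submission
  imports Defs
begin

lemma pw:
  fixes \<mu> \<sigma> z :: real
  assumes "0 \<le> \<sigma>" "\<sigma> \<le> 1"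
  shows "exp (-\<bar>\<mu>\<bar> - 1) * (3/2 - z^2/2) \<le> exp (- \<bar>\<mu> + \<sigma> * z\<bar>)"
proof -
  have a: "\<bar>\<mu> + \<sigma> * z\<bar> \<le> \<bar>\<mu>\<bar> + \<bar>z\<bar>"
  proof -
    have "\<bar>\<sigma> * z\<bar> \<le> \<bar>z\<bar>" using assms by (simp add: abs_mult mult_le_cancel_right1 mult_left_le_one_le)
    thus ?thesis by linarith
  qed
  have "exp (-\<bar>\<mu>\<bar> - 1) * (3/2 - z^2/2) \<le> exp (-\<bar>\<mu>\<bar> - 1) * (1 + (1 - \<bar>z\<bar>))"
  proof -
    have "(\<bar>z\<bar> - 1)^2 \<ge> 0" by simp
    hence "3/2 - z^2/2 \<le> 1 + (1 - \<bar>z\<bar>)" by (simp add: power2_eq_square algebra_simps)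
    thus ?thesis by simp
  qed
  also have "\<dots> \<le> exp (-\<bar>\<mu>\<bar> - 1) * exp (1 - \<bar>z\<bar>)"
    by (intro mult_left_mono exp_ge_add_one_self) simp
  also have "\<dots> = exp (-\<bar>\<mu>\<bar> - \<bar>z\<bar>)" by (simp add: exp_add[symmetric])
  also have "\<dots> \<le> exp (- \<bar>\<mu> + \<sigma> * z\<bar>)" using a by simp
  finally show ?thesis .
qed

lemma gbound:
  fixes \<sigma> \<mu> :: real
  assumes "0 \<le> \<sigma>" "\<sigma> \<le> 1"
  shows "exp (-\<bar>\<mu>\<bar> - 1) \<le> g_sigma \<sigma> \<mu>"
proof -
  have m0: "integral\<^sup>L lborel (\<lambda>x. std_normal_density x * x^(2*0)) = 1"
    using integral_std_normal_moment_even[of 0] by simp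
  have m1: "integral\<^sup>L lborel (\<lambda>x. std_normal_density x * x^(2*1)) = 1"
    using integral_std_normal_moment_even[of 1] by simp
  have i0: "integrable lborel (\<lambda>x. std_normal_density x)"
    using integrable_std_normal_moment[of 0] by simp
  have i2: "integrable lborel (\<lambda>x. std_normal_density x * x^2)"
    using integrable_std_normal_moment[of 2] by simp
  let ?c = "exp (-\<bar>\<mu>\<bar> - 1)"
  let ?f = "\<lambda>z. ?c * (3/2 * std_normal_density z - 1/2 * (std_normal_density z * z^2))"
  have fi: "integrable lborel ?f" using i0 i2 by auto
  have fint: "integral\<^sup>L lborel ?f = ?c"
    using i0 i2 m0 m1 by (simp add: integral_diff)
  have gi: "integrable lborel (\<lambda>z. std_normal_density z * ell_exp (\<mu> + \<sigma> * z))"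
  proof (rule Bochner_Integration.integrable_bound[OF i0])
    show "(\<lambda>z. std_normal_density z * ell_exp (\<mu> + \<sigma> * z)) \<in> borel_measurable lborel"
      unfolding ell_exp_def by measurable
    show "AE z in lborel. norm (std_normal_density z * ell_exp (\<mu> + \<sigma> * z)) \<le> norm (std_normal_density z)"
      by (intro AE_I2) (auto simp: ell_exp_def abs_mult intro!: mult_left_le normal_density_nonneg)
  qed
  have "?c = integral\<^sup>L lborel ?f" using fint by simp
  also have "\<dots> \<le> g_sigma \<sigma> \<mu>"
    unfolding g_sigma_def
  proof (rule integral_mono[OF fi gi])
    fix z :: real
    have "?f z = std_normal_density z * (?c * (3/2 - z^2/2))" by (simp add: algebra_simps)
    also have "\<dots> \<le> std_normal_density z * ell_exp (\<mu> + \<sigma> * z)"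
      unfolding ell_exp_def
      by (intro mult_left_mono pw assms normal_density_nonneg)
    finally show "?f z \<le> std_normal_density z * ell_exp (\<mu> + \<sigma> * z)" .
  qed
  finally show ?thesis .
qed

theorem claim3:
  fixes p p' :: "real \<Rightarrow> real" and \<sigma> \<nu> \<rho> :: real
  assumes pos: "\<And>x. p x > 0"
    and dens_int: "integrable lborel p"
    and dens_one: "(\<integral>x. p x \<partial>lborel) = 1"
    and p_deriv: "\<And>x. (p has_real_derivative p' x) (at x)"
    and nu_pos: "0 < \<nu>" and nu_le_rho: "\<nu> \<le> \<rho>"
    and strongly_concave: "\<And>x y. ln (p y) \<le> ln (p x) + (p' x / p x) * (y - x) - \<nu> / 2 * (y - x)\<^sup>2"
    and smooth: "\<And>x y. ln (p y) \<ge> ln (p x) + (p' x / p x) * (y - x) - \<rho> / 2 * (y - x)\<^sup>2"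
    and sigma_nonneg: "0 \<le> \<sigma>" and sigma_le: "\<sigma> \<le> 1"
  shows "loss_L p \<sigma> \<ge> 0.25 * p 0 *
           (LBINT \<delta>:{0..}. exp ((\<bar>p' 0 / p 0\<bar> - 1) * \<delta> - \<rho> / 2 * \<delta>\<^sup>2))"
proof -
  have pm[measurable]: "p \<in> borel_measurable lborel" using dens_int by (rule borel_measurable_integrable)
  have pmb[measurable]: "p \<in> borel_measurable borel" using pm by simp
  define s where "s = p' 0 / p 0"
  define h where "h = (\<lambda>\<delta>::real. exp ((\<bar>s\<bar> - 1) * \<delta> - \<rho> / 2 * \<delta>\<^sup>2))"
  define \<epsilon> :: real where "\<epsilon> = (if s \<ge> 0 then 1 else -1)"
  have eps: "\<bar>\<epsilon>\<bar> = 1" "\<epsilon> \<noteq> 0" "s * \<epsilon> = \<bar>s\<bar>" by (auto simp: \<epsilon>_def)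
  define q where "q = (\<lambda>\<mu>. p \<mu> * exp (- \<bar>\<mu>\<bar>))"
  have qm[measurable]: "q \<in> borel_measurable borel" unfolding q_def by measurable
  have qi: "integrable lborel q"
  proof (rule Bochner_Integration.integrable_bound[OF dens_int])
    show "q \<in> borel_measurable lborel" by simp
    show "AE x in lborel. norm (q x) \<le> norm (p x)"
      by (intro AE_I2) (simp add: q_def abs_mult mult_left_le)
  qed
  have gm: "g_sigma \<sigma> \<in> borel_measurable lborel"
  proof -
    have "(\<lambda>\<mu>. \<integral>z. std_normal_density z * ell_exp (\<mu> + \<sigma> * z) \<partial>lborel) \<in> borel_measurable lborel"
      unfolding ell_exp_def by measurable
    thus ?thesis unfolding g_sigma_def[abs_def] .
  qed
  have gle: "g_sigma \<sigma> \<mu> \<le> 1" for \<mu>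
  proof -
    have i0: "integrable lborel (\<lambda>x. std_normal_density x)"
      using integrable_std_normal_moment[of 0] by simp
    have m0: "integral\<^sup>L lborel (\<lambda>x. std_normal_density x) = 1"
      using integral_std_normal_moment_even[of 0] by simp
    have gi: "integrable lborel (\<lambda>z. std_normal_density z * ell_exp (\<mu> + \<sigma> * z))"
    proof (rule Bochner_Integration.integrable_bound[OF i0])
      show "(\<lambda>z. std_normal_density z * ell_exp (\<mu> + \<sigma> * z)) \<in> borel_measurable lborel"
        unfolding ell_exp_def by measurable
      show "AE z in lborel. norm (std_normal_density z * ell_exp (\<mu> + \<sigma> * z)) \<le> norm (std_normal_density z)"
        by (intro AE_I2) (auto simp: ell_exp_def abs_mult intro!: mult_left_le normal_density_nonneg)
    qed
    have "g_sigma \<sigma> \<mu> \<le> integral\<^sup>L lborel (\<lambda>x. std_normal_density x)"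
      unfolding g_sigma_def
      by (rule integral_mono[OF gi i0]) (auto simp: ell_exp_def intro!: mult_left_le normal_density_nonneg)
    thus ?thesis using m0 by simp
  qed
  have gge: "exp (-\<bar>\<mu>\<bar> - 1) \<le> g_sigma \<sigma> \<mu>" for \<mu>
    using gbound[OF sigma_nonneg sigma_le] .
  have g0: "0 \<le> g_sigma \<sigma> \<mu>" for \<mu> using gge[of \<mu>] by (smt (verit) exp_gt_zero)
  have pgi: "integrable lborel (\<lambda>\<mu>. p \<mu> * g_sigma \<sigma> \<mu>)"
  proof (rule Bochner_Integration.integrable_bound[OF dens_int])
    show "(\<lambda>\<mu>. p \<mu> * g_sigma \<sigma> \<mu>) \<in> borel_measurable lborel" using gm pm by measurable
    show "AE x in lborel. norm (p x * g_sigma \<sigma> x) \<le> norm (p x)"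
      using g0 gle by (intro AE_I2) (simp add: abs_mult mult_left_le)
  qed
  have q1i: "integrable lborel (\<lambda>\<mu>. exp (-1) * q \<mu>)" using qi by simp
  have "exp (-1) * integral\<^sup>L lborel q = integral\<^sup>L lborel (\<lambda>\<mu>. exp (-1) * q \<mu>)" by simp
  also have "\<dots> \<le> loss_L p \<sigma>"
    unfolding loss_L_def
  proof (rule integral_mono[OF q1i pgi])
    fix \<mu> :: real
    have "exp (-1) * q \<mu> = p \<mu> * exp (-\<bar>\<mu>\<bar> - 1)" by (simp add: q_def exp_diff exp_minus field_simps)
    also have "\<dots> \<le> p \<mu> * g_sigma \<sigma> \<mu>" using pos[of \<mu>] gge[of \<mu>] by (intro mult_left_mono) auto
    finally show "exp (-1) * q \<mu> \<le> p \<mu> * g_sigma \<sigma> \<mu>" .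
  qed
  finally have L1: "exp (-1) * integral\<^sup>L lborel q \<le> loss_L p \<sigma>" .
  have qe: "integral\<^sup>L lborel q = integral\<^sup>L lborel (\<lambda>x. q (\<epsilon> * x))"
    using lborel_integral_real_affine[OF eps(2), of q 0] eps by simp
  have qei: "integrable lborel (\<lambda>x. q (\<epsilon> * x))"
    using lborel_integrable_real_affine[OF qi eps(2), of 0] by simp
  have iqei: "integrable lborel (\<lambda>x. indicator {0..} x * q (\<epsilon> * x))"
  proof (rule Bochner_Integration.integrable_bound[OF qei])
    show "(\<lambda>x. indicator {0..} x * q (\<epsilon> * x)) \<in> borel_measurable lborel" by measurable
    show "AE x in lborel. norm (indicator {0..} x * q (\<epsilon> * x)) \<le> norm (q (\<epsilon> * x))"
      by (intro AE_I2) (auto simp: indicator_def)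
  qed
  have key: "p 0 * h \<delta> \<le> q (\<epsilon> * \<delta>)" if "0 \<le> \<delta>" for \<delta>
  proof -
    have "ln (p (\<epsilon>*\<delta>)) \<ge> ln (p 0) + s * (\<epsilon>*\<delta>) - \<rho>/2 * (\<epsilon>*\<delta>)\<^sup>2"
      using smooth[of 0 "\<epsilon>*\<delta>"] by (simp add: s_def)
    also have "ln (p 0) + s * (\<epsilon>*\<delta>) - \<rho>/2 * (\<epsilon>*\<delta>)\<^sup>2 = ln (p 0) + \<bar>s\<bar> * \<delta> - \<rho>/2 * \<delta>\<^sup>2"
    proof -
      have "\<epsilon>\<^sup>2 = 1" using eps(1) by (metis abs_power2 power2_abs power_one)
      hence "(\<epsilon>*\<delta>)\<^sup>2 = \<delta>\<^sup>2" by (simp add: power_mult_distrib)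
      moreover have "s * (\<epsilon>*\<delta>) = \<bar>s\<bar> * \<delta>" using eps(3) by (simp add: mult.assoc[symmetric])
      ultimately show ?thesis by simp
    qed
    finally have "exp (ln (p 0) + \<bar>s\<bar> * \<delta> - \<rho>/2 * \<delta>\<^sup>2) \<le> exp (ln (p (\<epsilon>*\<delta>)))" by simp
    hence A: "p 0 * exp (\<bar>s\<bar> * \<delta> - \<rho>/2 * \<delta>\<^sup>2) \<le> p (\<epsilon>*\<delta>)"
      using pos by (simp add: exp_add exp_diff)
    have "p 0 * h \<delta> = p 0 * exp (\<bar>s\<bar> * \<delta> - \<rho>/2 * \<delta>\<^sup>2) * exp (- \<delta>)"
      by (simp add: h_def exp_add[symmetric] algebra_simps)
    also have "\<dots> \<le> p (\<epsilon>*\<delta>) * exp (- \<delta>)" using A by simp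
    also have "\<dots> = q (\<epsilon> * \<delta>)" using eps that by (simp add: q_def abs_mult)
    finally show ?thesis .
  qed
  have hi: "integrable lborel (\<lambda>x. indicator {0..} x * (p 0 * h x))"
  proof (rule Bochner_Integration.integrable_bound[OF iqei])
    show "(\<lambda>x. indicator {0..} x * (p 0 * h x)) \<in> borel_measurable lborel" unfolding h_def by measurable
    show "AE x in lborel. norm (indicator {0..} x * (p 0 * h x)) \<le> norm (indicator {0..} x * q (\<epsilon> * x))"
    proof (intro AE_I2)
      fix x :: real
      have "0 \<le> p 0 * h x" using pos[of 0] by (simp add: h_def)
      moreover have "0 \<le> x \<Longrightarrow> p 0 * h x \<le> q (\<epsilon> * x)" by (rule key)
      ultimately show "norm (indicator {0..} x * (p 0 * h x)) \<le> norm (indicator {0..} x * q (\<epsilon> * x))"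
        by (auto simp: indicator_def)
    qed
  qed
  have "p 0 * (LBINT \<delta>:{0..}. h \<delta>) = integral\<^sup>L lborel (\<lambda>x. indicator {0..} x * (p 0 * h x))"
    unfolding set_lebesgue_integral_def
    by (subst integral_mult_right_zero[symmetric]) (simp add: ac_simps)
  also have "\<dots> \<le> integral\<^sup>L lborel (\<lambda>x. indicator {0..} x * q (\<epsilon> * x))"
    by (rule integral_mono[OF hi iqei]) (auto simp: indicator_def key)
  also have "\<dots> \<le> integral\<^sup>L lborel (\<lambda>x. q (\<epsilon> * x))"
    by (rule integral_mono[OF iqei qei]) (auto simp: indicator_def q_def less_imp_le pos)
  finally have L2: "p 0 * (LBINT \<delta>:{0..}. h \<delta>) \<le> integral\<^sup>L lborel q" using qe by simp
  have J0: "0 \<le> (LBINT \<delta>:{0..}. h \<delta>)"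
    unfolding set_lebesgue_integral_def by (rule integral_nonneg_AE) (auto simp: h_def indicator_def)
  have e: "0.25 \<le> exp (-1::real)"
    using exp_le by (simp add: exp_minus field_simps)
  have "0.25 * p 0 * (LBINT \<delta>:{0..}. h \<delta>) \<le> exp (-1) * (p 0 * (LBINT \<delta>:{0..}. h \<delta>))"
  proof -
    have "0 \<le> p 0 * (LBINT \<delta>:{0..}. h \<delta>)" using J0 pos[of 0] by simp
    from mult_right_mono[OF e this] show ?thesis by (simp add: ac_simps)
  qed
  also have "\<dots> \<le> exp (-1) * integral\<^sup>L lborel q" using L2 by simp
  finally show ?thesis using L1 by (simp add: h_def s_def)
qed

end
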